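(* Let $\mathbb N$ be a symmetric directed graph on $m$ vertices (no self-arcs) with arcs enumerated $e_1,\dots,e_d$, each arc $e_k$ carrying a real matrix $C_{e_k}$ with $n$ columns and orthonormal rows. Let $\mathbb G$ be a symmetric spanning subgraph of $\mathbb N$, $J_{\mathbb G}$ its spanning incidence matrix, $w_1,\dots,w_d$ its spanning Metropolis weights, $\bar J_{\mathbb G}=J_{\mathbb G}\otimes I_n$, and $\Lambda_{\mathbb G}=\operatorname{blockdiag}(w_1C_{e_1}'C_{e_1},\dots,w_dC_{e_d}'C_{e_d})$. Then all eigenvalues of the symmetric matrix $A_{\mathbb G}=I_{mn}-\tfrac12\bar J_{\mathbb G}\Lambda_{\mathbb G}\bar J_{\mathbb G}'$ lie in $(-1,1]$. If moreover $\mathbb G=\mathbb N$ and $\bar{\mathbb N}$ is well-configured, then $A_{\mathbb N}$ has exactly $n$ eigenvalues equal to $1$ (with multiplicity) and all other eigenvalues lie in $(-1,1)$.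
   Context: A directed graph is symmetric if whenever $(i,j)$ is an arc so is $(j,i)$. Spanning incidence matrix: $J_{\mathbb G}\in\mathbb R^{m\times d}$ whose column $k$ has $+1$ in row $i$ and $-1$ in row $j$ if $e_k=(j,i)$ is an arc of $\mathbb G$, and is zero if $e_k$ is not an arc of $\mathbb G$ (for $\mathbb G=\mathbb N$ this is the ordinary incidence matrix). Spanning Metropolis weights: if $e_k=(j,i)$ is an arc of $\mathbb G$, $w_k=1/(1+\max\{\bar d_i,\bar d_j\})$ where $\bar d_v$ is the number of neighbors of $v$ in $\mathbb G$; otherwise $w_k=0$. $'$ denotes transpose. $\bar{\mathbb N}$ is well-configured if for all $x_1,\dots,x_m\in\mathbb R^n$, $C_{ji}x_i=C_{ji}x_j$ for every arc $(j,i)$ of $\mathbb N$ implies $x_1=\cdots=x_m$. *)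

theory Defs
  imports "Jordan_Normal_Form.Jordan_Normal_Form"
begin

text \<open>Vertices are 0..<m. Arcs are e 0, ..., e (d-1); e k = (j,i) is the arc from j to i.\<close>

definition arc_digraph :: "nat \<Rightarrow> nat \<Rightarrow> (nat \<Rightarrow> nat \<times> nat) \<Rightarrow> bool" where
  "arc_digraph m d e \<longleftrightarrow>
     (\<forall>k<d. fst (e k) < m \<and> snd (e k) < m \<and> fst (e k) \<noteq> snd (e k)) \<and> inj_on e {..<d}"

definition symmetric_arcs :: "(nat \<Rightarrow> nat \<times> nat) \<Rightarrow> nat set \<Rightarrow> bool" where
  "symmetric_arcs e S \<longleftrightarrow> (\<forall>k\<in>S. \<exists>k'\<in>S. e k' = (snd (e k), fst (e k)))"

definition nbr_count :: "nat \<Rightarrow> (nat \<Rightarrow> nat \<times> nat) \<Rightarrow> nat set \<Rightarrow> nat \<Rightarrow> nat" where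
  "nbr_count m e G v = card {u. u < m \<and> (\<exists>k\<in>G. e k = (u, v))}"

definition spanning_incidence ::
  "nat \<Rightarrow> nat \<Rightarrow> (nat \<Rightarrow> nat \<times> nat) \<Rightarrow> nat set \<Rightarrow> real mat" where
  "spanning_incidence m d e G = mat m d (\<lambda>(r, k).
      if k \<in> G then (if r = snd (e k) then 1 else if r = fst (e k) then -1 else 0) else 0)"

definition metropolis_weight ::
  "nat \<Rightarrow> (nat \<Rightarrow> nat \<times> nat) \<Rightarrow> nat set \<Rightarrow> nat \<Rightarrow> real" where
  "metropolis_weight m e G k =
     (if k \<in> G then 1 / (1 + real (max (nbr_count m e G (snd (e k))) (nbr_count m e G (fst (e k)))))
      else 0)"

definition kron :: "real mat \<Rightarrow> real mat \<Rightarrow> real mat" where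
  "kron A B = mat (dim_row A * dim_row B) (dim_col A * dim_col B)
     (\<lambda>(r, c). A $$ (r div dim_row B, c div dim_col B) * B $$ (r mod dim_row B, c mod dim_col B))"

definition Lambda_mat ::
  "nat \<Rightarrow> nat \<Rightarrow> (nat \<Rightarrow> nat \<times> nat) \<Rightarrow> (nat \<Rightarrow> real mat) \<Rightarrow> nat set \<Rightarrow> real mat" where
  "Lambda_mat m d e C G =
     diag_block_mat (map (\<lambda>k. metropolis_weight m e G k \<cdot>\<^sub>m (transpose_mat (C k) * C k)) [0..<d])"

definition A_mat ::
  "nat \<Rightarrow> nat \<Rightarrow> nat \<Rightarrow> (nat \<Rightarrow> nat \<times> nat) \<Rightarrow> (nat \<Rightarrow> real mat) \<Rightarrow> nat set \<Rightarrow> real mat" where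
  "A_mat m n d e C G =
     (let Jb = kron (spanning_incidence m d e G) (1\<^sub>m n)
      in 1\<^sub>m (m * n) - (1/2) \<cdot>\<^sub>m (Jb * Lambda_mat m d e C G * transpose_mat Jb))"

definition well_configured ::
  "nat \<Rightarrow> nat \<Rightarrow> nat \<Rightarrow> (nat \<Rightarrow> nat \<times> nat) \<Rightarrow> (nat \<Rightarrow> real mat) \<Rightarrow> bool" where
  "well_configured m n d e C \<longleftrightarrow>
     (\<forall>x :: nat \<Rightarrow> real vec. (\<forall>i<m. x i \<in> carrier_vec n) \<longrightarrow>
        (\<forall>k<d. C k *\<^sub>v x (snd (e k)) = C k *\<^sub>v x (fst (e k))) \<longrightarrow>
        (\<forall>i<m. \<forall>j<m. x i = x j))"

end

theory Submission imports Defs "Jordan_Normal_Form.Jordan_Normal_Form_Uniqueness" "Jordan_Normal_Form.Jordan_Normal_Form_Existence" begin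

hide_const (open) Coset.order



lemma real_sym_eig_real:
  fixes R :: "real mat"
  assumes R: "R \<in> carrier_mat N N" and sym: "\<And>i j. i < N \<Longrightarrow> j < N \<Longrightarrow> R $$ (i,j) = R $$ (j,i)"
  and ev: "eigenvalue (map_mat complex_of_real R) a"
  shows "cnj a = a"
proof -
  from ev obtain v where v: "v \<in> carrier_vec N" and v0: "v \<noteq> 0\<^sub>v N" and Av: "map_mat of_real R *\<^sub>v v = a \<cdot>\<^sub>v v"
    unfolding eigenvalue_def eigenvector_def using R by auto
  define s where "s = (\<Sum>i<N. \<Sum>j<N. of_real (R$$(i,j)) * v$j * cnj (v$i))"
  define t where "t = (\<Sum>i<N. of_real ((cmod (v$i))^2) :: complex)"
  have Avi: "(\<Sum>j<N. of_real (R$$(i,j)) * v$j) = a * v$i" if i: "i < N" for i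
  proof -
    have "(map_mat of_real R *\<^sub>v v) $ i = a * v$i" using Av i v by simp
    moreover have "(map_mat of_real R *\<^sub>v v) $ i = (\<Sum>j<N. of_real (R$$(i,j)) * v$j)"
      using i R v by (auto simp: mult_mat_vec_def scalar_prod_def lessThan_atLeast0)
    ultimately show ?thesis by simp
  qed
  have s1: "s = a * t"
  proof -
    have "s = (\<Sum>i<N. (\<Sum>j<N. of_real (R$$(i,j)) * v$j) * cnj (v$i))"
      unfolding s_def by (simp add: sum_distrib_right)
    also have "\<dots> = (\<Sum>i<N. a * (v$i * cnj (v$i)))" by (rule sum.cong, auto simp: Avi)
    also have "\<dots> = a * t" unfolding t_def sum_distrib_left complex_norm_square by simp
    finally show ?thesis .
  qed
  have s2: "cnj s = s"
  proof -
    have "cnj s = (\<Sum>i<N. \<Sum>j<N. of_real (R$$(i,j)) * cnj (v$j) * v$i)"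
      unfolding s_def by (simp add: cnj_sum)
    also have "\<dots> = (\<Sum>j<N. \<Sum>i<N. of_real (R$$(i,j)) * cnj (v$j) * v$i)" by (rule sum.swap)
    also have "\<dots> = s" unfolding s_def
      by (intro sum.cong refl, auto simp: sym mult.commute mult.left_commute)
    finally show ?thesis .
  qed
  have tr: "cnj t = t" unfolding t_def by (simp add: cnj_sum)
  obtain i where i: "i < N" "v$i \<noteq> 0"
    using v0 v by (metis eq_vecI carrier_vecD index_zero_vec(1) index_zero_vec(2))
  have "Re t > 0"
  proof -
    have "Re t = (\<Sum>j<N. (cmod (v$j))^2)" unfolding t_def by (simp add: Re_sum)
    also have "\<dots> > 0"
      by (rule sum_pos2[of _ i], use i in auto)
    finally show ?thesis .
  qed
  hence t0: "t \<noteq> 0" by auto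
  from s1 s2 have "cnj a * cnj t = a * t" by simp
  with tr t0 show ?thesis by simp
qed

lemma real_sym_split:
  fixes R :: "real mat"
  assumes R: "R \<in> carrier_mat N N" and sym: "\<And>i j. i < N \<Longrightarrow> j < N \<Longrightarrow> R $$ (i,j) = R $$ (j,i)"
  shows "\<exists>as. char_poly R = (\<Prod>a\<leftarrow>as. [:- a, 1:])"
proof -
  let ?C = "map_mat complex_of_real R"
  have C: "?C \<in> carrier_mat N N" using R by simp
  from char_poly_factorized[OF C] obtain as where as: "char_poly ?C = (\<Prod>a\<leftarrow>as. [:- a, 1:])" by auto
  have real: "cnj a = a" if a: "a \<in> set as" for a
  proof (rule real_sym_eig_real[OF R sym])
    have "poly (char_poly ?C) a = 0" unfolding as using a
      by (simp add: poly_prod_list prod_list_zero_iff)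
    thus "eigenvalue ?C a" using eigenvalue_root_char_poly[OF C] by simp
  qed auto
  have "(\<Prod>a\<leftarrow>as. [:- a, 1:]) = map_poly complex_of_real (\<Prod>a\<leftarrow>map Re as. [:- a, 1:])"
    using real
  proof (induct as)
    case Nil then show ?case by simp
  next
    case (Cons a as)
    have "a = of_real (Re a)" using Cons(2)[of a] by (auto simp: complex_eq_iff)
    then have "[:-a, 1:] = map_poly complex_of_real [:- Re a, 1:]" by (simp add: map_poly_pCons)
    interpret mp: map_poly_comm_ring_hom "complex_of_real" ..
    have IH: "(\<Prod>a\<leftarrow>as. [:- a, 1:]) = map_poly complex_of_real (\<Prod>a\<leftarrow>map Re as. [:- a, 1:])"
      using Cons by auto
    have "(\<Prod>a\<leftarrow>a#as. [:- a, 1:]) = [:-a, 1:] * (\<Prod>a\<leftarrow>as. [:- a, 1:])" by simp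
    also have "\<dots> = map_poly complex_of_real [:- Re a, 1:] * map_poly complex_of_real (\<Prod>a\<leftarrow>map Re as. [:- a, 1:])"
      using IH \<open>[:-a, 1:] = map_poly complex_of_real [:- Re a, 1:]\<close> by simp
    also have "\<dots> = map_poly complex_of_real ([:- Re a, 1:] * (\<Prod>a\<leftarrow>map Re as. [:- a, 1:]))"
      by (rule mp.hom_mult[symmetric])
    also have "\<dots> = map_poly complex_of_real (\<Prod>a\<leftarrow>map Re (a#as). [:- a, 1:])" by simp
    finally show ?case .
  qed
  moreover have "char_poly ?C = map_poly of_real (char_poly R)"
    using of_real_hom.char_poly_hom[OF R] by simp
  ultimately have "map_poly complex_of_real (char_poly R) = map_poly complex_of_real (\<Prod>a\<leftarrow>map Re as. [:- a, 1:])"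
    using as by simp
  hence "char_poly R = (\<Prod>a\<leftarrow>map Re as. [:- a, 1:])"
  proof (intro poly_eqI)
    fix i
    assume "map_poly complex_of_real (char_poly R) = map_poly complex_of_real (\<Prod>a\<leftarrow>map Re as. [:- a, 1:])"
    hence "coeff (map_poly complex_of_real (char_poly R)) i = coeff (map_poly complex_of_real (\<Prod>a\<leftarrow>map Re as. [:- a, 1:])) i" by simp
    thus "coeff (char_poly R) i = coeff (\<Prod>a\<leftarrow>map Re as. [:- a, 1:]) i" by (simp add: coeff_map_poly)
  qed
  thus ?thesis by blast
qed




lemma sum_reindex_mult:
  fixes f :: "nat \<Rightarrow> 'a :: comm_monoid_add"
  shows "(\<Sum>r<m*n. f r) = (\<Sum>u<m. \<Sum>a<n. f (u*n + a))"
proof (induct m)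
  case 0 then show ?case by simp
next
  case (Suc m)
  have "(\<Sum>r<Suc m * n. f r) = (\<Sum>r<m*n. f r) + (\<Sum>r\<in>{m*n..<m*n+n}. f r)"
    by (simp add: lessThan_atLeast0 sum.atLeastLessThan_concat add.commute)
  also have "(\<Sum>r\<in>{m*n..<m*n+n}. f r) = (\<Sum>a<n. f (m*n + a))"
    using sum.shift_bounds_nat_ivl[of f 0 "m*n" n]
    by (simp add: lessThan_atLeast0 add.commute)
  finally show ?case using Suc by simp
qed

lemma diag_block_uniform:
  assumes "\<And>A. A \<in> set As \<Longrightarrow> A \<in> carrier_mat n n"
  shows "diag_block_mat As = mat (length As * n) (length As * n)
     (\<lambda>(i,j). if i div n = j div n then As ! (i div n) $$ (i mod n, j mod n) else 0)"
  using assms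
proof (induct As)
  case Nil show ?case by (intro eq_matI) auto
next
  case (Cons A As)
  have A: "A \<in> carrier_mat n n" using Cons by auto
  have B: "diag_block_mat As = mat (length As * n) (length As * n)
     (\<lambda>(i,j). if i div n = j div n then As ! (i div n) $$ (i mod n, j mod n) else 0)"
    using Cons by auto
  let ?B = "diag_block_mat As"
  have Bc: "?B \<in> carrier_mat (length As * n) (length As * n)" unfolding B by simp
  have eq: "diag_block_mat (A # As) = four_block_mat A (0\<^sub>m n (length As * n)) (0\<^sub>m (length As * n) n) ?B"
    using A Bc by (simp add: Let_def)
  show ?case unfolding eq
  proof (intro eq_matI)
    fix i j assume i: "i < dim_row (mat (length (A # As) * n) (length (A # As) * n)
          (\<lambda>(i, j). if i div n = j div n then (A # As) ! (i div n) $$ (i mod n, j mod n) else 0))"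
      and j: "j < dim_col (mat (length (A # As) * n) (length (A # As) * n)
          (\<lambda>(i, j). if i div n = j div n then (A # As) ! (i div n) $$ (i mod n, j mod n) else 0))"
    from i j have i': "i < n + length As * n" and j': "j < n + length As * n" by auto
    hence n0: "n > 0" by (cases n, auto)
    have lhs: "four_block_mat A (0\<^sub>m n (length As * n)) (0\<^sub>m (length As * n) n) ?B $$ (i,j) =
      (if i < n then if j < n then A $$ (i,j) else 0 else if j < n then 0 else ?B $$ (i - n, j - n))"
      using A Bc i' j' by (auto simp: four_block_mat_def)
    show "four_block_mat A (0\<^sub>m n (length As * n)) (0\<^sub>m (length As * n) n) ?B $$ (i,j) =
      mat (length (A # As) * n) (length (A # As) * n)
          (\<lambda>(i, j). if i div n = j div n then (A # As) ! (i div n) $$ (i mod n, j mod n) else 0) $$ (i,j)"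
    proof (cases "i < n")
      case True
      then show ?thesis
      proof (cases "j < n")
        case True
        with \<open>i < n\<close> i' j' show ?thesis unfolding lhs by simp
      next
        case False
        with \<open>i < n\<close> i' j' n0 show ?thesis unfolding lhs
          by (auto simp: le_div_geq)
      qed
    next
      case False
      note ni = this
      show ?thesis
      proof (cases "j < n")
        case True
        with ni i' j' n0 show ?thesis unfolding lhs by (auto simp: le_div_geq)
      next
        case False
        have il: "i - n < length As * n" "j - n < length As * n" using i' j' ni False by auto
        have dv: "i div n = Suc ((i - n) div n)" "j div n = Suc ((j - n) div n)"
          using ni False n0 by (auto simp: le_div_geq)
        have md: "i mod n = (i - n) mod n" "j mod n = (j - n) mod n"
          using ni False by (auto simp: le_mod_geq)
        show ?thesis unfolding lhs using ni False il i' j'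
          by (simp add: B dv md)
      qed
    qed
  qed (insert A Bc, auto)
qed







lemma idx_lt: "k < (d::nat) \<Longrightarrow> a < n \<Longrightarrow> k*n+a < d*n"
proof -
  assume k: "k < d" and a: "a < n"
  have "k*n+a < (k+1)*n" using a by simp
  also have "\<dots> \<le> d*n" using k by (intro mult_le_mono1) simp
  finally show ?thesis .
qed

lemma idx_div: "a < (n::nat) \<Longrightarrow> (k*n+a) div n = k" by simp
lemma idx_mod: "a < (n::nat) \<Longrightarrow> (k*n+a) mod n = a" by simp




lemma mat_vec_index_sum: assumes P: "P \<in> carrier_mat n n" and a: "a < n"
  shows "(P *\<^sub>v vec n f) $ a = (\<Sum>b<n. P $$ (a,b) * f b)"
  using P a by (simp add: scalar_prod_def lessThan_atLeast0)




lemma vec_sq_nonneg: "(x :: real vec) \<bullet> x \<ge> 0"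
  unfolding scalar_prod_def by (intro sum_nonneg) auto

lemma vec_sq_zero: assumes "(x :: real vec) \<bullet> x = 0" and "x \<in> carrier_vec N"
  shows "x = 0\<^sub>v N"
proof -
  have "\<forall>i\<in>{0..<dim_vec x}. x $ i * x $ i = 0"
    using assms(1) unfolding scalar_prod_def by (subst sum_nonneg_eq_0_iff[symmetric]) auto
  thus ?thesis using assms(2) by (intro eq_vecI) auto
qed

lemma orth_bound: assumes C: "C \<in> carrier_mat r n" and CC: "C * transpose_mat C = 1\<^sub>m r"
  and y: "(y :: real vec) \<in> carrier_vec n"
  shows "(C *\<^sub>v y) \<bullet> (C *\<^sub>v y) \<le> y \<bullet> y"
proof -
  define u where "u = C *\<^sub>v y"
  define p where "p = transpose_mat C *\<^sub>v u"
  have u: "u \<in> carrier_vec r" unfolding u_def using C y by simp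
  have p: "p \<in> carrier_vec n" unfolding p_def using C u by simp
  have yp: "y \<bullet> p = u \<bullet> u"
  proof -
    have "y \<bullet> p = p \<bullet> y" using y p by (rule comm_scalar_prod)
    also have "\<dots> = u \<bullet> (C *\<^sub>v y)" unfolding p_def by (rule transpose_vec_mult_scalar[OF C y u])
    finally show ?thesis unfolding u_def .
  qed
  have pp: "p \<bullet> p = u \<bullet> u"
  proof -
    have "p \<bullet> p = u \<bullet> (C *\<^sub>v p)" using transpose_vec_mult_scalar[OF C p u] by (simp only: p_def[symmetric])
    also have "C *\<^sub>v p = (C * transpose_mat C) *\<^sub>v u" unfolding p_def
      using C u by (simp add: assoc_mult_mat_vec[of _ r n _ r])
    also have "\<dots> = u" unfolding CC using u by simp
    finally show ?thesis .
  qed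
  have "0 \<le> (\<Sum>i\<in>{0..<n}. (y $ i - p $ i)^2)" by (intro sum_nonneg) auto
  also have "\<dots> = y \<bullet> y - 2 * (y \<bullet> p) + p \<bullet> p"
    using y p by (simp add: scalar_prod_def power2_diff sum_subtractf sum.distrib sum_distrib_left algebra_simps power2_eq_square)
  finally show ?thesis unfolding yp pp u_def by simp
qed




lemma sq_diff_le: "((x::real) - y)^2 \<le> 2*x^2 + 2*y^2"
proof -
  have "0 \<le> (x+y)^2" by simp
  thus ?thesis unfolding power2_eq_square by (simp add: algebra_simps)
qed



lemma kdim_eq: "mat_kernel A = mat_kernel B \<Longrightarrow> kernel.dim n A = kernel.dim n B" by simp

lemma sum_min_list: "sum_list (map (min 2) (ns::nat list)) = sum_list (map (min 1) ns) \<Longrightarrow>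
   sum_list ns = sum_list (map (min 1) ns)"
proof (induct ns)
  case (Cons a ns)
  have le: "sum_list (map (min 1) ns) \<le> sum_list (map (min 2) ns)"
    by (induct ns) auto
  from Cons(2) le have "min 2 a \<le> min 1 a" by simp
  hence a: "a \<le> 1" by auto
  with Cons(2) have "sum_list (map (min 2) ns) = sum_list (map (min 1) ns)" by auto
  with Cons(1) a show ?case by auto
qed simp

lemma order_from_dims: fixes A :: "real mat"
  assumes jnf: "jordan_nf A n_as"
  and eq: "dim_gen_eigenspace A 1 2 = dim_gen_eigenspace A 1 1"
  shows "order 1 (char_poly A) = dim_gen_eigenspace A 1 1"
proof -
  define ns where "ns = map fst (filter (\<lambda>na. snd na = (1::real)) n_as)"
  have o: "order 1 (char_poly A) = sum_list ns" unfolding ns_def by (rule jordan_nf_order[OF jnf])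
  have lc: "map fst [(n, e)\<leftarrow>n_as . e = (1::real)] = ns" unfolding ns_def
    by (induct n_as) auto
  have dk: "dim_gen_eigenspace A 1 k = sum_list (map (min k) ns)" for k
    using dim_gen_eigenspace[OF jnf, of 1 k] unfolding lc by simp
  have e2: "sum_list (map (min 2) ns) = sum_list (map (min 1) ns)" using eq unfolding dk .
  show ?thesis unfolding o dk by (rule sum_min_list[OF e2])
qed


lemma smult_mat_vec: assumes A: "A \<in> carrier_mat nr nc" and v: "v \<in> carrier_vec nc"
  shows "(k \<cdot>\<^sub>m A) *\<^sub>v v = k \<cdot>\<^sub>v (A *\<^sub>v (v :: 'a :: comm_ring_1 vec))"
  by (intro eq_vecI) (use A v in \<open>auto simp: scalar_prod_def sum_distrib_left ac_simps\<close>)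

context
  fixes m n d :: nat and e :: "nat \<Rightarrow> nat \<times> nat" and C :: "nat \<Rightarrow> real mat" and G :: "nat set"
  assumes arcs: "\<forall>k<d. fst (e k) < m \<and> snd (e k) < m \<and> fst (e k) \<noteq> snd (e k)"
  and Cdim: "\<forall>k<d. dim_col (C k) = n"
  and Gd: "G \<subseteq> {..<d}"
  and inj: "inj_on e {..<d}"
  and Gsym: "symmetric_arcs e G"
  and Corth: "\<forall>k<d. C k * transpose_mat (C k) = 1\<^sub>m (dim_row (C k))"
begin


abbreviation "JJ \<equiv> spanning_incidence m d e G"
abbreviation "Jb \<equiv> kron JJ (1\<^sub>m n)"
abbreviation "LL \<equiv> Lambda_mat m d e C G"
abbreviation "ww \<equiv> metropolis_weight m e G"
abbreviation "PP k \<equiv> transpose_mat (C k) * C k"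

lemma JJ_carrier: "JJ \<in> carrier_mat m d" unfolding spanning_incidence_def by simp

lemma JJ_index: "u < m \<Longrightarrow> k < d \<Longrightarrow> JJ $$ (u,k) =
   (if k \<in> G then (if u = snd (e k) then 1 else 0) - (if u = fst (e k) then 1 else 0) else 0)"
  using arcs unfolding spanning_incidence_def by auto

lemma Jb_carrier: "Jb \<in> carrier_mat (m*n) (d*n)"
  using JJ_carrier unfolding kron_def by auto

lemma Jb_index: assumes r: "r < m*n" and q: "q < d*n"
  shows "Jb $$ (r,q) = JJ $$ (r div n, q div n) * (if r mod n = q mod n then 1 else 0)"
proof -
  have n0: "n > 0" using r by (cases n, auto)
  have "r div n < m" using r by (simp add: less_mult_imp_div_less)
  moreover have "q div n < d" using q by (simp add: less_mult_imp_div_less)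
  ultimately show ?thesis using r q n0 JJ_carrier unfolding kron_def by auto
qed

lemma PP_carrier: "k < d \<Longrightarrow> PP k \<in> carrier_mat n n"
  using Cdim by auto

lemma LL_eq: "LL = mat (d*n) (d*n)
     (\<lambda>(i,j). if i div n = j div n then ww (i div n) * PP (i div n) $$ (i mod n, j mod n) else 0)"
proof -
  have "LL = mat (length (map (\<lambda>k. ww k \<cdot>\<^sub>m PP k) [0..<d]) * n) (length (map (\<lambda>k. ww k \<cdot>\<^sub>m PP k) [0..<d]) * n)
     (\<lambda>(i,j). if i div n = j div n then (map (\<lambda>k. ww k \<cdot>\<^sub>m PP k) [0..<d]) ! (i div n) $$ (i mod n, j mod n) else 0)"
    unfolding Lambda_mat_def
    by (rule diag_block_uniform, insert PP_carrier, auto)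
  also have "\<dots> = mat (d*n) (d*n)
     (\<lambda>(i,j). if i div n = j div n then ww (i div n) * PP (i div n) $$ (i mod n, j mod n) else 0)"
  proof (intro eq_matI)
    fix i j assume i: "i < dim_row (mat (d*n) (d*n)
     (\<lambda>(i,j). if i div n = j div n then ww (i div n) * PP (i div n) $$ (i mod n, j mod n) else 0))"
      and j: "j < dim_col (mat (d*n) (d*n)
     (\<lambda>(i,j). if i div n = j div n then ww (i div n) * PP (i div n) $$ (i mod n, j mod n) else 0))"
    have n0: "n > 0" using i by (cases n, auto)
    have id: "i div n < d" using i by (simp add: less_mult_imp_div_less)
    have PPc: "PP (i div n) \<in> carrier_mat n n" using PP_carrier[OF id] .
    show "mat (length (map (\<lambda>k. ww k \<cdot>\<^sub>m PP k) [0..<d]) * n) (length (map (\<lambda>k. ww k \<cdot>\<^sub>m PP k) [0..<d]) * n)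
     (\<lambda>(i,j). if i div n = j div n then (map (\<lambda>k. ww k \<cdot>\<^sub>m PP k) [0..<d]) ! (i div n) $$ (i mod n, j mod n) else 0) $$ (i,j)
      = mat (d*n) (d*n)
     (\<lambda>(i,j). if i div n = j div n then ww (i div n) * PP (i div n) $$ (i mod n, j mod n) else 0) $$ (i,j)"
      using i j id PPc n0 by (auto simp del: index_mult_mat)
  qed auto
  finally show ?thesis .
qed

lemma LL_carrier: "LL \<in> carrier_mat (d*n) (d*n)" unfolding LL_eq by simp




lemma zz_index: assumes v: "v \<in> carrier_vec (m*n)" and k: "k < d" and a: "a < n"
  shows "(transpose_mat (Jb) *\<^sub>v v) $ (k*n+a) =
     (if k \<in> G then v $ (snd (e k) * n + a) - v $ (fst (e k) * n + a) else 0)"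
proof -
  have Jb: "Jb \<in> carrier_mat (m*n) (d*n)" using Jb_carrier .
  have q: "k*n+a < d*n" using idx_lt k a .
  have "(transpose_mat (Jb) *\<^sub>v v) $ (k*n+a) = (\<Sum>r<m*n. Jb $$ (r, k*n+a) * v $ r)"
    using Jb v q by (simp add: scalar_prod_def lessThan_atLeast0 mult.commute)
  also have "\<dots> = (\<Sum>u<m. \<Sum>b<n. Jb $$ (u*n+b, k*n+a) * v $ (u*n+b))"
    by (rule sum_reindex_mult)
  also have "\<dots> = (\<Sum>u<m. \<Sum>b<n. (if b = a then JJ $$ (u, k) * v $ (u*n+a) else 0))"
  proof (intro sum.cong refl)
    fix u b assume u: "u \<in> {..<m}" and b: "b \<in> {..<n}"
    have ub: "u*n+b < m*n" using idx_lt u b by auto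
    show "Jb $$ (u*n+b, k*n+a) * v $ (u*n+b) = (if b = a then JJ $$ (u, k) * v $ (u*n+a) else 0)"
      using Jb_index[OF ub q] u b a by auto
  qed
  also have "\<dots> = (\<Sum>u<m. JJ $$ (u, k) * v $ (u*n+a))"
    using a by simp
  also have "\<dots> = (\<Sum>u<m. (if k \<in> G then (if u = snd (e k) then v $ (snd (e k) * n + a) else 0)
       - (if u = fst (e k) then v $ (fst (e k) * n + a) else 0) else 0))"
    by (intro sum.cong refl, auto simp: JJ_index k)
  also have "\<dots> = (if k \<in> G then v $ (snd (e k) * n + a) - v $ (fst (e k) * n + a) else 0)"
    using arcs k by (auto simp: sum_subtractf)
  finally show ?thesis .
qed




lemma LL_index: assumes k: "k < d" and a: "a < n" and k': "k' < d" and b: "b < n"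
  shows "LL $$ (k*n+a, k'*n+b) = (if k = k' then ww k * PP k $$ (a,b) else 0)"
  using idx_lt[OF k a] idx_lt[OF k' b] a b by (simp add: LL_eq)

lemma LL_vec: assumes z: "z \<in> carrier_vec (d*n)" and k: "k < d" and a: "a < n"
  shows "(LL *\<^sub>v z) $ (k*n+a) = ww k * (\<Sum>b<n. PP k $$ (a,b) * z $ (k*n+b))"
proof -
  have L: "LL \<in> carrier_mat (d*n) (d*n)" using LL_carrier .
  have "(LL *\<^sub>v z) $ (k*n+a) = (\<Sum>q<d*n. LL $$ (k*n+a, q) * z $ q)"
    using L z idx_lt[OF k a] by (simp add: scalar_prod_def lessThan_atLeast0)
  also have "\<dots> = (\<Sum>k'<d. \<Sum>b<n. LL $$ (k*n+a, k'*n+b) * z $ (k'*n+b))"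
    by (rule sum_reindex_mult)
  also have "\<dots> = (\<Sum>k'<d. if k' = k then (\<Sum>b<n. ww k * PP k $$ (a,b) * z $ (k*n+b)) else 0)"
    by (intro sum.cong refl, auto simp: LL_index k a)
  also have "\<dots> = ww k * (\<Sum>b<n. PP k $$ (a,b) * z $ (k*n+b))"
    using k by (simp add: sum_distrib_left mult.assoc)
  finally show ?thesis .
qed

definition yv :: "real vec \<Rightarrow> nat \<Rightarrow> real vec" where
  "yv v k = vec n (\<lambda>a. (transpose_mat (Jb) *\<^sub>v v) $ (k*n+a))"

lemma quad_form: assumes v: "v \<in> carrier_vec (m*n)"
  shows "v \<bullet> ((Jb * LL * transpose_mat (Jb)) *\<^sub>v v)
     = (\<Sum>k<d. ww k * ((C k *\<^sub>v yv v k) \<bullet> (C k *\<^sub>v yv v k)))"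
proof -
  let ?J = "Jb" let ?L = "LL"
  have J: "?J \<in> carrier_mat (m*n) (d*n)" using Jb_carrier .
  have L: "?L \<in> carrier_mat (d*n) (d*n)" using LL_carrier .
  define z where "z = transpose_mat ?J *\<^sub>v v"
  have z: "z \<in> carrier_vec (d*n)" unfolding z_def carrier_vec_def using J by auto
  have JL: "?J * ?L \<in> carrier_mat (m*n) (d*n)" using J L by simp
  have JT: "transpose_mat ?J \<in> carrier_mat (d*n) (m*n)" using J by simp
  have "(?J * ?L * transpose_mat ?J) *\<^sub>v v = (?J * ?L) *\<^sub>v z"
    unfolding z_def by (rule assoc_mult_mat_vec[OF JL JT v])
  also have "\<dots> = ?J *\<^sub>v (?L *\<^sub>v z)" by (rule assoc_mult_mat_vec[OF J L z])
  finally have "(?J * ?L * transpose_mat ?J) *\<^sub>v v = ?J *\<^sub>v (?L *\<^sub>v z)" .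
  hence "v \<bullet> ((?J * ?L * transpose_mat ?J) *\<^sub>v v) = v \<bullet> (?J *\<^sub>v (?L *\<^sub>v z))" by simp
  also have "\<dots> = z \<bullet> (?L *\<^sub>v z)"
    unfolding z_def using transpose_vec_mult_scalar[OF J, of "?L *\<^sub>v z" v] L v z z_def by simp
  also have "\<dots> = (\<Sum>q<d*n. z $ q * (?L *\<^sub>v z) $ q)"
  proof -
    have dl: "dim_vec (?L *\<^sub>v z) = d*n" using L by simp
    show ?thesis unfolding scalar_prod_def dl lessThan_atLeast0 ..
  qed
  also have "\<dots> = (\<Sum>k<d. \<Sum>a<n. z $ (k*n+a) * (?L *\<^sub>v z) $ (k*n+a))"
    by (rule sum_reindex_mult)
  also have "\<dots> = (\<Sum>k<d. ww k * (yv v k \<bullet> (PP k *\<^sub>v yv v k)))"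
  proof (intro sum.cong refl)
    fix k assume k: "k \<in> {..<d}"
    have Pc: "PP k \<in> carrier_mat n n" using PP_carrier k by auto
    have "(\<Sum>a<n. z $ (k*n+a) * (?L *\<^sub>v z) $ (k*n+a))
       = (\<Sum>a<n. z $ (k*n+a) * (ww k * (\<Sum>b<n. PP k $$ (a,b) * z $ (k*n+b))))"
      using LL_vec[OF z] k by auto
    also have "\<dots> = ww k * (\<Sum>a<n. yv v k $ a * (PP k *\<^sub>v yv v k) $ a)"
      unfolding sum_distrib_left yv_def z_def[symmetric]
      by (intro sum.cong refl, insert Pc, auto simp: mat_vec_index_sum[OF Pc] sum_distrib_left ac_simps)
    also have "(\<Sum>a<n. yv v k $ a * (PP k *\<^sub>v yv v k) $ a) = yv v k \<bullet> (PP k *\<^sub>v yv v k)"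
    proof -
      have dl: "dim_vec (PP k *\<^sub>v yv v k) = n" using Cdim k by simp
      show ?thesis unfolding scalar_prod_def dl lessThan_atLeast0 ..
    qed
    finally show "(\<Sum>a<n. z $ (k*n+a) * (?L *\<^sub>v z) $ (k*n+a)) = ww k * (yv v k \<bullet> (PP k *\<^sub>v yv v k))" .
  qed
  also have "\<dots> = (\<Sum>k<d. ww k * ((C k *\<^sub>v yv v k) \<bullet> (C k *\<^sub>v yv v k)))"
  proof (intro sum.cong refl)
    fix k assume k: "k \<in> {..<d}"
    obtain r where Ck: "C k \<in> carrier_mat r n" using Cdim k by (metis carrier_mat_triv lessThan_iff)
    have y: "yv v k \<in> carrier_vec n" by (simp add: yv_def)
    have "yv v k \<bullet> (PP k *\<^sub>v yv v k) = yv v k \<bullet> (transpose_mat (C k) *\<^sub>v (C k *\<^sub>v yv v k))"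
      using Ck y by (simp add: assoc_mult_mat_vec[of _ n r _ n])
    also have "\<dots> = (transpose_mat (C k) *\<^sub>v (C k *\<^sub>v yv v k)) \<bullet> yv v k"
      using Ck y by (intro comm_scalar_prod[of _ n]) auto
    also have "\<dots> = (C k *\<^sub>v yv v k) \<bullet> (C k *\<^sub>v yv v k)"
      using transpose_vec_mult_scalar[OF Ck y, of "C k *\<^sub>v yv v k"] Ck y by simp
    finally show "ww k * (yv v k \<bullet> (PP k *\<^sub>v yv v k)) = ww k * ((C k *\<^sub>v yv v k) \<bullet> (C k *\<^sub>v yv v k))" by simp
  qed
  finally show ?thesis .
qed




abbreviation "DD u \<equiv> nbr_count m e G u"

lemma ww_nonneg: "ww k \<ge> 0"
  unfolding metropolis_weight_def by auto

lemma ww_le: assumes "k \<in> G" "u = snd (e k) \<or> u = fst (e k)"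
  shows "ww k \<le> 1 / (1 + real (DD u))"
proof -
  have "real (DD u) \<le> real (max (DD (snd (e k))) (DD (fst (e k))))" using assms(2) by auto
  hence "1 / (1 + real (max (DD (snd (e k))) (DD (fst (e k))))) \<le> 1 / (1 + real (DD u))"
    by (intro divide_left_mono) auto
  thus ?thesis using assms(1) unfolding metropolis_weight_def by simp
qed

lemma nbr_finite: "finite {w. w < m \<and> (\<exists>k\<in>G. e k = (w, u))}"
  by (rule finite_subset[of _ "{..<m}"]) auto

lemma card_in: "card {k\<in>G. snd (e k) = u} \<le> DD u"
  unfolding nbr_count_def
proof (rule card_inj_on_le[of "\<lambda>k. fst (e k)"])
  show "inj_on (\<lambda>k. fst (e k)) {k \<in> G. snd (e k) = u}"
  proof (rule inj_onI)
    fix k1 k2 assume k1: "k1 \<in> {k \<in> G. snd (e k) = u}" and k2: "k2 \<in> {k \<in> G. snd (e k) = u}"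
      and eq: "fst (e k1) = fst (e k2)"
    have "e k1 = e k2" using k1 k2 eq by (simp add: prod_eq_iff)
    moreover have "k1 \<in> {..<d}" "k2 \<in> {..<d}" using k1 k2 Gd by auto
    ultimately show "k1 = k2" by (rule inj_onD[OF inj])
  qed
  show "(\<lambda>k. fst (e k)) ` {k \<in> G. snd (e k) = u} \<subseteq> {w. w < m \<and> (\<exists>k\<in>G. e k = (w, u))}"
  proof
    fix w assume "w \<in> (\<lambda>k. fst (e k)) ` {k \<in> G. snd (e k) = u}"
    then obtain k where k: "k \<in> G" "snd (e k) = u" and w: "w = fst (e k)" by blast
    have "k < d" using k Gd by auto
    hence m: "fst (e k) < m" using arcs by blast
    have "e k = (fst (e k), u)" using k(2) by (simp add: prod_eq_iff)
    with m k(1) show "w \<in> {w. w < m \<and> (\<exists>k\<in>G. e k = (w, u))}" unfolding w by blast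
  qed
qed (rule nbr_finite)

lemma card_out: "card {k\<in>G. fst (e k) = u} \<le> DD u"
  unfolding nbr_count_def
proof (rule card_inj_on_le[of "\<lambda>k. snd (e k)"])
  show "inj_on (\<lambda>k. snd (e k)) {k \<in> G. fst (e k) = u}"
  proof (rule inj_onI)
    fix k1 k2 assume k1: "k1 \<in> {k \<in> G. fst (e k) = u}" and k2: "k2 \<in> {k \<in> G. fst (e k) = u}"
      and eq: "snd (e k1) = snd (e k2)"
    have "e k1 = e k2" using k1 k2 eq by (simp add: prod_eq_iff)
    moreover have "k1 \<in> {..<d}" "k2 \<in> {..<d}" using k1 k2 Gd by auto
    ultimately show "k1 = k2" by (rule inj_onD[OF inj])
  qed
  show "(\<lambda>k. snd (e k)) ` {k \<in> G. fst (e k) = u} \<subseteq> {w. w < m \<and> (\<exists>k\<in>G. e k = (w, u))}"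
  proof
    fix w assume "w \<in> (\<lambda>k. snd (e k)) ` {k \<in> G. fst (e k) = u}"
    then obtain k where k: "k \<in> G" "fst (e k) = u" and w: "w = snd (e k)" by blast
    have "k < d" using k Gd by auto
    hence m: "snd (e k) < m" using arcs by blast
    obtain k' where "k' \<in> G" "e k' = (snd (e k), fst (e k))"
      using Gsym k unfolding symmetric_arcs_def by blast
    with m k(2) show "w \<in> {w. w < m \<and> (\<exists>k\<in>G. e k = (w, u))}" unfolding w by blast
  qed
qed (rule nbr_finite)

lemma wsum_bound: assumes c: "\<And>k. k \<in> G \<Longrightarrow> g k = u \<Longrightarrow> u = snd (e k) \<or> u = fst (e k)"
  and card: "card {k\<in>G. g k = u} \<le> DD u"
  shows "(\<Sum>k\<in>{k\<in>G. g k = u}. ww k) \<le> real (DD u) / (1 + real (DD u))"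
proof -
  have "(\<Sum>k\<in>{k\<in>G. g k = u}. ww k) \<le> real (card {k\<in>G. g k = u}) * (1 / (1 + real (DD u)))"
    by (rule sum_bounded_above, rule ww_le, insert c, auto)
  also have "\<dots> \<le> real (DD u) * (1 / (1 + real (DD u)))"
    using card by (intro mult_right_mono) auto
  finally show ?thesis by simp
qed


abbreviation "QQ v \<equiv> (\<Sum>k<d. ww k * ((C k *\<^sub>v yv v k) \<bullet> (C k *\<^sub>v yv v k)))"

lemma QQ_nonneg: "QQ v \<ge> 0"
  by (intro sum_nonneg mult_nonneg_nonneg ww_nonneg vec_sq_nonneg)

lemma yv_index: assumes v: "v \<in> carrier_vec (m*n)" and k: "k < d" and a: "a < n"
  shows "yv v k $ a = (if k \<in> G then v $ (snd (e k) * n + a) - v $ (fst (e k) * n + a) else 0)"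
  using zz_index[OF v k a] a unfolding yv_def by simp

lemma QQ_lt: assumes v: "v \<in> carrier_vec (m*n)" and v0: "v \<noteq> 0\<^sub>v (m*n)"
  shows "QQ v < 4 * (v \<bullet> v)"
proof -
  define S where "S u = (\<Sum>a<n. (v $ (u*n+a))^2)" for u
  have S0: "S u \<ge> 0" for u unfolding S_def by (intro sum_nonneg) auto
  have vv: "v \<bullet> v = (\<Sum>u<m. S u)"
  proof -
    have "v \<bullet> v = (\<Sum>r<m*n. (v $ r)^2)"
      using v by (simp add: scalar_prod_def lessThan_atLeast0 power2_eq_square)
    also have "\<dots> = (\<Sum>u<m. S u)" unfolding S_def by (rule sum_reindex_mult)
    finally show ?thesis .
  qed
  define c where "c u = real (DD u) / (1 + real (DD u))" for u
  have c1: "c u < 1" for u unfolding c_def by simp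
  have c0: "c u \<ge> 0" for u unfolding c_def by simp
  have yy: "yv v k \<bullet> yv v k \<le> 2 * S (snd (e k)) + 2 * S (fst (e k))" if k: "k < d" "k \<in> G" for k
  proof -
    have dy: "dim_vec (yv v k) = n" by (simp add: yv_def)
    have "yv v k \<bullet> yv v k = (\<Sum>a\<in>{0..<n}. yv v k $ a * yv v k $ a)" unfolding scalar_prod_def dy ..
    also have "\<dots> = (\<Sum>a<n. (v $ (snd (e k) * n + a) - v $ (fst (e k) * n + a))^2)"
      by (auto simp: lessThan_atLeast0 yv_index[OF v k(1)] k(2) power2_eq_square intro!: sum.cong)
    also have "\<dots> \<le> (\<Sum>a<n. 2 * (v $ (snd (e k) * n + a))^2 + 2 * (v $ (fst (e k) * n + a))^2)"
      by (intro sum_mono sq_diff_le)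
    also have "\<dots> = 2 * S (snd (e k)) + 2 * S (fst (e k))"
      unfolding S_def by (simp add: sum.distrib sum_distrib_left)
    finally show ?thesis .
  qed
  have step1: "QQ v \<le> (\<Sum>k<d. ww k * (yv v k \<bullet> yv v k))"
  proof (intro sum_mono mult_left_mono ww_nonneg)
    fix k assume k: "k \<in> {..<d}"
    have Ck: "C k \<in> carrier_mat (dim_row (C k)) n" using Cdim k by auto
    show "(C k *\<^sub>v yv v k) \<bullet> (C k *\<^sub>v yv v k) \<le> yv v k \<bullet> yv v k"
      by (rule orth_bound[OF Ck]) (use Corth k in \<open>auto simp: yv_def\<close>)
  qed
  have step2: "(\<Sum>k<d. ww k * (yv v k \<bullet> yv v k)) \<le> (\<Sum>k\<in>G. ww k * (2 * S (snd (e k)) + 2 * S (fst (e k))))"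
  proof -
    have "(\<Sum>k<d. ww k * (yv v k \<bullet> yv v k)) = (\<Sum>k\<in>G. ww k * (yv v k \<bullet> yv v k))"
      by (rule sum.mono_neutral_right) (use Gd in \<open>auto simp: metropolis_weight_def\<close>)
    also have "\<dots> \<le> (\<Sum>k\<in>G. ww k * (2 * S (snd (e k)) + 2 * S (fst (e k))))"
      by (intro sum_mono mult_left_mono ww_nonneg yy) (use Gd in auto)
    finally show ?thesis .
  qed
  have grp: "(\<Sum>k\<in>G. ww k * S (g k)) = (\<Sum>u<m. S u * (\<Sum>k\<in>{k\<in>G. g k = u}. ww k))"
    if g: "\<And>k. k \<in> G \<Longrightarrow> g k < m" for g
  proof -
    have fG: "finite G" using Gd finite_subset by blast
    have "(\<Sum>k\<in>G. ww k * S (g k)) = (\<Sum>u<m. \<Sum>k\<in>{k\<in>G. g k = u}. ww k * S (g k))"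
      by (rule sum.group[symmetric]) (use fG g in auto)
    also have "\<dots> = (\<Sum>u<m. S u * (\<Sum>k\<in>{k\<in>G. g k = u}. ww k))"
      by (intro sum.cong refl) (auto simp: sum_distrib_left mult.commute intro!: sum.cong)
    finally show ?thesis .
  qed
  have gs: "snd (e k) < m" "fst (e k) < m" if "k \<in> G" for k using arcs Gd that by auto
  have bin: "(\<Sum>k\<in>{k\<in>G. snd (e k) = u}. ww k) \<le> c u" for u
    unfolding c_def by (rule wsum_bound[OF _ card_in]) auto
  have bout: "(\<Sum>k\<in>{k\<in>G. fst (e k) = u}. ww k) \<le> c u" for u
    unfolding c_def by (rule wsum_bound[OF _ card_out]) auto
  have step3: "(\<Sum>k\<in>G. ww k * (2 * S (snd (e k)) + 2 * S (fst (e k)))) \<le> 4 * (\<Sum>u<m. S u * c u)"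
  proof -
    have "(\<Sum>k\<in>G. ww k * (2 * S (snd (e k)) + 2 * S (fst (e k))))
        = 2 * (\<Sum>k\<in>G. ww k * S (snd (e k))) + 2 * (\<Sum>k\<in>G. ww k * S (fst (e k)))"
      by (simp add: sum.distrib sum_distrib_left algebra_simps)
    also have "\<dots> = 2 * (\<Sum>u<m. S u * (\<Sum>k\<in>{k\<in>G. snd (e k) = u}. ww k))
                  + 2 * (\<Sum>u<m. S u * (\<Sum>k\<in>{k\<in>G. fst (e k) = u}. ww k))"
      using grp[of "\<lambda>k. snd (e k)"] grp[of "\<lambda>k. fst (e k)"] gs by simp
    also have "\<dots> \<le> 2 * (\<Sum>u<m. S u * c u) + 2 * (\<Sum>u<m. S u * c u)"
      by (intro add_mono mult_left_mono sum_mono S0 bin bout) auto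
    finally show ?thesis by simp
  qed
  obtain i where i: "i < m*n" "v $ i \<noteq> 0"
    using v0 v by (metis eq_vecI carrier_vecD index_zero_vec(1) index_zero_vec(2))
  have n0: "n > 0" using i by (cases n, auto)
  define u where "u = i div n"
  have u: "u < m" unfolding u_def using i by (simp add: less_mult_imp_div_less)
  have iu: "i = u*n + i mod n" unfolding u_def by simp
  have "0 < (v $ i)^2" using i by simp
  also have "(v $ i)^2 \<le> S u" unfolding S_def
    by (subst iu, rule member_le_sum[of "i mod n"]) (use n0 in auto)
  finally have Su: "S u > 0" .
  have strict: "(\<Sum>u<m. S u * c u) < (\<Sum>u<m. S u)"
  proof (rule sum_strict_mono_ex1)
    show "\<forall>x\<in>{..<m}. S x * c x \<le> S x"
      using S0 c1 by (metis less_eq_real_def mult_left_le)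
    show "\<exists>a\<in>{..<m}. S a * c a < S a" using u Su c1[of u]
      by (intro bexI[of _ u]) (auto simp: mult_less_cancel_left2)
  qed auto
  show ?thesis using step1 step2 step3 strict vv by linarith
qed


abbreviation "MM \<equiv> Jb * LL * transpose_mat Jb"

lemma MM_carrier: "MM \<in> carrier_mat (m*n) (m*n)" using Jb_carrier LL_carrier by auto

lemma MM_vec: assumes v: "v \<in> carrier_vec (m*n)"
  shows "MM *\<^sub>v v = Jb *\<^sub>v (LL *\<^sub>v (transpose_mat Jb *\<^sub>v v))"
proof -
  have J: "Jb \<in> carrier_mat (m*n) (d*n)" using Jb_carrier .
  have L: "LL \<in> carrier_mat (d*n) (d*n)" using LL_carrier .
  have JL: "Jb * LL \<in> carrier_mat (m*n) (d*n)" using J L by simp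
  have JT: "transpose_mat Jb \<in> carrier_mat (d*n) (m*n)" using J by simp
  have z: "transpose_mat Jb *\<^sub>v v \<in> carrier_vec (d*n)" using JT v by simp
  have "MM *\<^sub>v v = (Jb * LL) *\<^sub>v (transpose_mat Jb *\<^sub>v v)"
    by (rule assoc_mult_mat_vec[OF JL JT v])
  also have "\<dots> = Jb *\<^sub>v (LL *\<^sub>v (transpose_mat Jb *\<^sub>v v))" by (rule assoc_mult_mat_vec[OF J L z])
  finally show ?thesis .
qed

lemma A_eq: "A_mat m n d e C G = 1\<^sub>m (m*n) - (1/2) \<cdot>\<^sub>m MM"
  unfolding A_mat_def Let_def by simp

lemma A_carrier: "A_mat m n d e C G \<in> carrier_mat (m*n) (m*n)"
  unfolding A_eq carrier_mat_def using MM_carrier by auto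

lemma A_vec: assumes v: "v \<in> carrier_vec (m*n)"
  shows "A_mat m n d e C G *\<^sub>v v = v - (1/2) \<cdot>\<^sub>v (MM *\<^sub>v v)"
proof -
  have M2: "(1/2) \<cdot>\<^sub>m MM \<in> carrier_mat (m*n) (m*n)" using MM_carrier by simp
  show ?thesis unfolding A_eq
    using minus_mult_distrib_mat_vec[OF one_carrier_mat M2 v] smult_mat_vec[OF MM_carrier v] v
    by simp
qed

lemma eig_bound: assumes ev: "eigenvalue (A_mat m n d e C G) \<mu>"
  shows "-1 < \<mu> \<and> \<mu> \<le> 1"
proof -
  have dr: "dim_row (A_mat m n d e C G) = m*n" using A_carrier by simp
  from ev obtain v where v: "v \<in> carrier_vec (m*n)" and v0: "v \<noteq> 0\<^sub>v (m*n)"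
    and Av: "A_mat m n d e C G *\<^sub>v v = \<mu> \<cdot>\<^sub>v v"
    unfolding eigenvalue_def eigenvector_def dr by auto
  have Mv: "MM *\<^sub>v v \<in> carrier_vec (m*n)" using MM_carrier v by simp
  have Mv2: "(1/2) \<cdot>\<^sub>v (MM *\<^sub>v v) \<in> carrier_vec (m*n)" using Mv by simp
  have "v \<bullet> (A_mat m n d e C G *\<^sub>v v) = v \<bullet> v - (1/2) * (v \<bullet> (MM *\<^sub>v v))"
    unfolding A_vec[OF v]
    using scalar_prod_minus_distrib[OF v v Mv2] scalar_prod_smult_distrib[OF v Mv] by simp
  also have "v \<bullet> (MM *\<^sub>v v) = QQ v" using quad_form[OF v] by simp
  finally have e1: "v \<bullet> (A_mat m n d e C G *\<^sub>v v) = v \<bullet> v - (1/2) * QQ v" .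
  have e2: "v \<bullet> (A_mat m n d e C G *\<^sub>v v) = \<mu> * (v \<bullet> v)"
    unfolding Av using scalar_prod_smult_distrib[OF v v] .
  have vv: "v \<bullet> v > 0"
  proof -
    have "v \<bullet> v \<noteq> 0" using vec_sq_zero[of v "m*n"] v v0 by auto
    thus ?thesis using vec_sq_nonneg[of v] by linarith
  qed
  have q0: "QQ v \<ge> 0" by (rule QQ_nonneg)
  have q4: "QQ v < 4 * (v \<bullet> v)" by (rule QQ_lt[OF v v0])
  have "\<mu> * (v \<bullet> v) \<le> 1 * (v \<bullet> v)" using e1 e2 q0 by simp
  hence "\<mu> \<le> 1" using vv by (simp add: mult_le_cancel_right_pos)
  moreover have "(-1) * (v \<bullet> v) < \<mu> * (v \<bullet> v)" using e1 e2 q4 by simp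
  hence "-1 < \<mu>" by (simp only: mult_less_cancel_right_pos[OF vv])
  ultimately show ?thesis by simp
qed

lemma PP_sym: assumes k: "k < d" and a: "a < n" and b: "b < n"
  shows "PP k $$ (a,b) = PP k $$ (b,a)"
  using Cdim k a b by (simp add: scalar_prod_def mult.commute)

lemma LL_sym: "transpose_mat LL = LL"
proof (rule eq_matI)
  fix i j assume i: "i < dim_row LL" and j: "j < dim_col LL"
  have i': "i < d*n" and j': "j < d*n" using i j LL_carrier by auto
  have n0: "n > 0" using i' by (cases n, auto)
  have id: "i div n < d" using i' by (simp add: less_mult_imp_div_less)
  show "transpose_mat LL $$ (i, j) = LL $$ (i, j)"
    using i' j' id n0 PP_sym[OF id, of "j mod n" "i mod n"] by (auto simp: LL_eq)
qed (use LL_carrier in auto)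

lemma MM_sym: "transpose_mat MM = MM"
proof -
  have J: "Jb \<in> carrier_mat (m*n) (d*n)" using Jb_carrier .
  have L: "LL \<in> carrier_mat (d*n) (d*n)" using LL_carrier .
  have JL: "Jb * LL \<in> carrier_mat (m*n) (d*n)" using J L by simp
  have JT: "transpose_mat Jb \<in> carrier_mat (d*n) (m*n)" using J by simp
  have "transpose_mat MM = transpose_mat (transpose_mat Jb) * transpose_mat (Jb * LL)"
    by (rule transpose_mult[OF JL JT])
  also have "transpose_mat (Jb * LL) = transpose_mat LL * transpose_mat Jb"
    by (rule transpose_mult[OF J L])
  also have "transpose_mat (transpose_mat Jb) * (transpose_mat LL * transpose_mat Jb) = Jb * (LL * transpose_mat Jb)"
    unfolding LL_sym by simp
  also have "\<dots> = MM" using assoc_mult_mat[OF J L JT] by simp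
  finally show ?thesis .
qed

lemma MM_zero_BE: assumes Gall: "G = {..<d}" and wc: "well_configured m n d e C"
  and v: "v \<in> carrier_vec (m*n)"
  shows "MM *\<^sub>v v = 0\<^sub>v (m*n) \<longleftrightarrow> (\<forall>u<m. \<forall>a<n. v $ (u*n+a) = v $ ((m-1)*n+a))"
proof
  assume BE: "\<forall>u<m. \<forall>a<n. v $ (u*n+a) = v $ ((m-1)*n+a)"
  have z0: "transpose_mat Jb *\<^sub>v v = 0\<^sub>v (d*n)"
  proof (rule eq_vecI)
    fix q assume "q < dim_vec (0\<^sub>v (d*n) :: real vec)"
    hence q: "q < d*n" by simp
    have n0: "n > 0" using q by (cases n, auto)
    have qd: "q div n < d" using q by (simp add: less_mult_imp_div_less)
    have qm: "q mod n < n" using n0 by simp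
    have qq: "q = (q div n) * n + q mod n" by simp
    have "(transpose_mat Jb *\<^sub>v v) $ q = (transpose_mat Jb *\<^sub>v v) $ ((q div n) * n + q mod n)"
      using qq by simp
    also have "\<dots> = 0"
    proof -
      have s: "snd (e (q div n)) < m" "fst (e (q div n)) < m" using arcs qd by auto
      have e1: "v $ (snd (e (q div n)) * n + q mod n) = v $ ((m-1)*n + q mod n)" using BE s(1) qm by blast
      have e2: "v $ (fst (e (q div n)) * n + q mod n) = v $ ((m-1)*n + q mod n)" using BE s(2) qm by blast
      show ?thesis unfolding zz_index[OF v qd qm] e1 e2 by simp
    qed
    finally show "(transpose_mat Jb *\<^sub>v v) $ q = 0\<^sub>v (d*n) $ q" using q by simp
  qed (use Jb_carrier in auto)
  have "LL *\<^sub>v 0\<^sub>v (d*n) = 0\<^sub>v (d*n)" using LL_carrier by auto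
  moreover have "Jb *\<^sub>v 0\<^sub>v (d*n) = 0\<^sub>v (m*n)" using Jb_carrier by auto
  ultimately show "MM *\<^sub>v v = 0\<^sub>v (m*n)" unfolding MM_vec[OF v] z0 by simp
next
  assume M0: "MM *\<^sub>v v = 0\<^sub>v (m*n)"
  have "QQ v = 0" using quad_form[OF v] M0 v by simp
  hence all0: "\<forall>k\<in>{..<d}. ww k * ((C k *\<^sub>v yv v k) \<bullet> (C k *\<^sub>v yv v k)) = 0"
    by (subst sum_nonneg_eq_0_iff[symmetric]) (auto intro: mult_nonneg_nonneg ww_nonneg vec_sq_nonneg)
  define x where "x u = vec n (\<lambda>a. v $ (u*n+a))" for u
  have xc: "\<forall>i<m. x i \<in> carrier_vec n" unfolding x_def by auto
  have Cx: "\<forall>k<d. C k *\<^sub>v x (snd (e k)) = C k *\<^sub>v x (fst (e k))"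
  proof (intro allI impI)
    fix k assume k: "k < d"
    have wpos: "ww k > 0" using k Gall unfolding metropolis_weight_def by auto
    have Ck: "C k \<in> carrier_mat (dim_row (C k)) n" using Cdim k by auto
    have yc: "yv v k \<in> carrier_vec n" by (simp add: yv_def)
    have h0: "ww k * ((C k *\<^sub>v yv v k) \<bullet> (C k *\<^sub>v yv v k)) = 0" using bspec[OF all0, of k] k by simp
    have "(C k *\<^sub>v yv v k) \<bullet> (C k *\<^sub>v yv v k) = (ww k * ((C k *\<^sub>v yv v k) \<bullet> (C k *\<^sub>v yv v k))) / ww k"
      using wpos by simp
    hence "(C k *\<^sub>v yv v k) \<bullet> (C k *\<^sub>v yv v k) = 0" unfolding h0 by simp
    have cc: "C k *\<^sub>v yv v k \<in> carrier_vec (dim_row (C k))" by (rule mult_mat_vec_carrier[OF Ck yc])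
    have Cy0: "C k *\<^sub>v yv v k = 0\<^sub>v (dim_row (C k))" by (rule vec_sq_zero[OF \<open>(C k *\<^sub>v yv v k) \<bullet> (C k *\<^sub>v yv v k) = 0\<close> cc])
    have dy: "dim_vec (yv v k) = n" by (simp add: yv_def)
    have kG: "k \<in> G" using k Gall by simp
    have yx: "yv v k = x (snd (e k)) - x (fst (e k))"
    proof (rule eq_vecI)
      fix i assume "i < dim_vec (x (snd (e k)) - x (fst (e k)))"
      hence i: "i < n" by (simp add: x_def)
      show "yv v k $ i = (x (snd (e k)) - x (fst (e k))) $ i"
        unfolding yv_index[OF v k i] using kG i by (simp add: x_def)
    qed (simp add: dy x_def)
    have "C k *\<^sub>v yv v k = C k *\<^sub>v x (snd (e k)) - C k *\<^sub>v x (fst (e k))"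
      unfolding yx by (rule mult_minus_distrib_mat_vec[OF Ck]) (auto simp: x_def)
    with Cy0 have h: "C k *\<^sub>v x (snd (e k)) - C k *\<^sub>v x (fst (e k)) = 0\<^sub>v (dim_row (C k))" by simp
    show "C k *\<^sub>v x (snd (e k)) = C k *\<^sub>v x (fst (e k))"
    proof (rule eq_vecI)
      fix i assume i: "i < dim_vec (C k *\<^sub>v x (fst (e k)))"
      have "(C k *\<^sub>v x (snd (e k)) - C k *\<^sub>v x (fst (e k))) $ i = 0" using h i by simp
      thus "(C k *\<^sub>v x (snd (e k))) $ i = (C k *\<^sub>v x (fst (e k))) $ i" using i by simp
    qed simp
  qed
  have wc': "(\<forall>i<m. x i \<in> carrier_vec n) \<longrightarrow> (\<forall>k<d. C k *\<^sub>v x (snd (e k)) = C k *\<^sub>v x (fst (e k)))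
     \<longrightarrow> (\<forall>i<m. \<forall>j<m. x i = x j)"
    using wc unfolding well_configured_def by (rule spec)
  have eqx: "\<forall>i<m. \<forall>j<m. x i = x j" by (rule mp[OF mp[OF wc' xc] Cx])
  show "\<forall>u<m. \<forall>a<n. v $ (u*n+a) = v $ ((m-1)*n+a)"
  proof (intro allI impI)
    fix u a assume u: "u < m" and a: "a < n"
    have m1: "m - 1 < m" using u by simp
    have "x u = x (m-1)" using eqx u m1 by blast
    hence "x u $ a = x (m-1) $ a" by simp
    thus "v $ (u*n+a) = v $ ((m-1)*n+a)" using a unfolding x_def by simp
  qed
qed

abbreviation "XX \<equiv> char_matrix (A_mat m n d e C G) 1"

lemma XX_eq: "XX = (-1/2) \<cdot>\<^sub>m MM"
proof (rule eq_matI)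
  fix i j assume i: "i < dim_row ((-1/2) \<cdot>\<^sub>m MM)" and j: "j < dim_col ((-1/2) \<cdot>\<^sub>m MM)"
  have i': "i < m*n" "j < m*n" using i j MM_carrier by auto
  show "XX $$ (i,j) = ((-1/2) \<cdot>\<^sub>m MM) $$ (i,j)"
    using i' MM_carrier A_carrier unfolding char_matrix_def A_eq by auto
qed (use MM_carrier A_carrier in \<open>auto simp: char_matrix_def\<close>)

lemma XX_carrier: "XX \<in> carrier_mat (m*n) (m*n)" unfolding XX_eq using MM_carrier by simp

lemma XX_vec: "v \<in> carrier_vec (m*n) \<Longrightarrow> XX *\<^sub>v v = (-1/2) \<cdot>\<^sub>v (MM *\<^sub>v v)"
  unfolding XX_eq by (rule smult_mat_vec[OF MM_carrier])

lemma MM_MM: assumes v: "v \<in> carrier_vec (m*n)"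
  shows "MM *\<^sub>v (MM *\<^sub>v v) = 0\<^sub>v (m*n) \<longleftrightarrow> MM *\<^sub>v v = 0\<^sub>v (m*n)"
proof
  assume h: "MM *\<^sub>v (MM *\<^sub>v v) = 0\<^sub>v (m*n)"
  have w: "MM *\<^sub>v v \<in> carrier_vec (m*n)" using MM_carrier v by simp
  have "(transpose_mat MM *\<^sub>v v) \<bullet> (MM *\<^sub>v v) = v \<bullet> (MM *\<^sub>v (MM *\<^sub>v v))"
    by (rule transpose_vec_mult_scalar[OF MM_carrier w v])
  also have "\<dots> = 0" unfolding h using v by simp
  finally have "(MM *\<^sub>v v) \<bullet> (MM *\<^sub>v v) = 0" unfolding MM_sym .
  thus "MM *\<^sub>v v = 0\<^sub>v (m*n)" by (rule vec_sq_zero[OF _ w])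
next
  assume h: "MM *\<^sub>v v = 0\<^sub>v (m*n)"
  have z: "MM *\<^sub>v 0\<^sub>v (m*n) = 0\<^sub>v (m*n)" using MM_carrier by (intro eq_vecI) (auto simp: scalar_prod_def)
  show "MM *\<^sub>v (MM *\<^sub>v v) = 0\<^sub>v (m*n)" unfolding h z ..
qed

lemma smult_half_zero: assumes w: "w \<in> carrier_vec N"
  shows "((-1/2) \<cdot>\<^sub>v w = 0\<^sub>v N) \<longleftrightarrow> (w = (0\<^sub>v N :: real vec))"
proof
  assume h: "(-1/2) \<cdot>\<^sub>v w = 0\<^sub>v N"
  show "w = 0\<^sub>v N"
  proof (rule eq_vecI)
    fix i assume "i < dim_vec (0\<^sub>v N :: real vec)"
    hence i: "i < N" by simp
    have "((-1/2) \<cdot>\<^sub>v w) $ i = 0" using h i by simp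
    thus "w $ i = 0\<^sub>v N $ i" using i w by simp
  qed (use w in simp)
next
  assume h: "w = 0\<^sub>v N"
  show "(-1/2) \<cdot>\<^sub>v w = 0\<^sub>v N" unfolding h by (intro eq_vecI) auto
qed

lemma ker_test: "v \<in> mat_kernel XX \<longleftrightarrow> (v \<in> carrier_vec (m*n) \<and> XX *\<^sub>v v = 0\<^sub>v (m*n))"
  using mat_kernel[OF XX_carrier] by simp

lemma ker_XX1: "v \<in> mat_kernel (XX ^\<^sub>m 1) \<longleftrightarrow> (v \<in> carrier_vec (m*n) \<and> MM *\<^sub>v v = 0\<^sub>v (m*n))"
proof -
  have p: "XX ^\<^sub>m 1 = XX" using XX_carrier by simp
  show ?thesis
  proof (cases "v \<in> carrier_vec (m*n)")
    case True
    have w: "MM *\<^sub>v v \<in> carrier_vec (m*n)" using MM_carrier True by simp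
    show ?thesis unfolding p ker_test XX_vec[OF True] smult_half_zero[OF w] using True by simp
  next
    case False thus ?thesis unfolding p ker_test by simp
  qed
qed

lemma ker_XX2: "v \<in> mat_kernel (XX ^\<^sub>m 2) \<longleftrightarrow> (v \<in> carrier_vec (m*n) \<and> MM *\<^sub>v v = 0\<^sub>v (m*n))"
proof -
  have p: "XX ^\<^sub>m 2 = XX * XX" using XX_carrier by (simp add: numeral_2_eq_2)
  have c2: "XX * XX \<in> carrier_mat (m*n) (m*n)" using XX_carrier by simp
  have k2: "v \<in> mat_kernel (XX * XX) \<longleftrightarrow> (v \<in> carrier_vec (m*n) \<and> (XX * XX) *\<^sub>v v = 0\<^sub>v (m*n))"
    using mat_kernel[OF c2] by simp
  show ?thesis
  proof (cases "v \<in> carrier_vec (m*n)")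
    case True
    note v = True
    have w: "MM *\<^sub>v v \<in> carrier_vec (m*n)" using MM_carrier v by simp
    have w2: "MM *\<^sub>v (MM *\<^sub>v v) \<in> carrier_vec (m*n)" using MM_carrier w by simp
    have "(XX * XX) *\<^sub>v v = XX *\<^sub>v (XX *\<^sub>v v)" by (rule assoc_mult_mat_vec[OF XX_carrier XX_carrier v])
    also have "XX *\<^sub>v v = (-1/2) \<cdot>\<^sub>v (MM *\<^sub>v v)" by (rule XX_vec[OF v])
    also have "XX *\<^sub>v ((-1/2) \<cdot>\<^sub>v (MM *\<^sub>v v)) = (-1/2) \<cdot>\<^sub>v (MM *\<^sub>v ((-1/2) \<cdot>\<^sub>v (MM *\<^sub>v v)))"
      by (rule XX_vec) (use w in simp)
    also have "MM *\<^sub>v ((-1/2) \<cdot>\<^sub>v (MM *\<^sub>v v)) = (-1/2) \<cdot>\<^sub>v (MM *\<^sub>v (MM *\<^sub>v v))"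
      by (rule mult_mat_vec[OF MM_carrier w])
    finally have e: "(XX * XX) *\<^sub>v v = (-1/2) \<cdot>\<^sub>v ((-1/2) \<cdot>\<^sub>v (MM *\<^sub>v (MM *\<^sub>v v)))" .
    have w3: "(-1/2) \<cdot>\<^sub>v (MM *\<^sub>v (MM *\<^sub>v v)) \<in> carrier_vec (m*n)" using w2 by simp
    show ?thesis unfolding p k2 e smult_half_zero[OF w3] smult_half_zero[OF w2] MM_MM[OF v] using v by simp
  next
    case False thus ?thesis unfolding p k2 by simp
  qed
qed

abbreviation "DM \<equiv> mat (m*n) (m*n) (\<lambda>(r,c). if r < (m-1)*n then
   (if c = r then 1 else if c = (m-1)*n + r mod n then -1 else 0) else (0::real))"

lemma DM_vec: assumes m0: "0 < m" and v: "v \<in> carrier_vec (m*n)" and r: "r < m*n"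
  shows "(DM *\<^sub>v v) $ r = (if r < (m-1)*n then v $ r - v $ ((m-1)*n + r mod n) else 0)"
proof -
  have n0: "n > 0" using r by (cases n, auto)
  have "(DM *\<^sub>v v) $ r = (\<Sum>c<m*n. DM $$ (r,c) * v $ c)"
    using v r by (simp add: scalar_prod_def lessThan_atLeast0)
  also have "\<dots> = (if r < (m-1)*n then v $ r - v $ ((m-1)*n + r mod n) else 0)"
  proof (cases "r < (m-1)*n")
    case True
    have mn: "(m-1)*n + n = m*n" using m0 by (cases m) auto
    have lt: "(m-1)*n + r mod n < m*n" using n0 mn by (metis add_less_cancel_left mod_less_divisor)
    have ne: "r \<noteq> (m-1)*n + r mod n" using True by auto
    have "(\<Sum>c<m*n. DM $$ (r,c) * v $ c) = (\<Sum>c<m*n. (if c = r then v $ c else 0) - (if c = (m-1)*n + r mod n then v $ c else 0))"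
      by (intro sum.cong refl) (use True r ne in auto)
    also have "\<dots> = v $ r - v $ ((m-1)*n + r mod n)"
      using r lt by (simp add: sum_subtractf)
    finally show ?thesis using True by simp
  next
    case False
    thus ?thesis using r by simp
  qed
  finally show ?thesis .
qed

lemma DM_carrier: "DM \<in> carrier_mat (m*n) (m*n)" by simp

lemma ker_DM: assumes m0: "0 < m"
  shows "v \<in> mat_kernel DM \<longleftrightarrow> (v \<in> carrier_vec (m*n) \<and> (\<forall>u<m. \<forall>a<n. v $ (u*n+a) = v $ ((m-1)*n+a)))"
proof -
  have k: "v \<in> mat_kernel DM \<longleftrightarrow> (v \<in> carrier_vec (m*n) \<and> DM *\<^sub>v v = 0\<^sub>v (m*n))"
    using mat_kernel[OF DM_carrier] by simp
  show ?thesis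
  proof (cases "v \<in> carrier_vec (m*n)")
    case False thus ?thesis using k by simp
  next
    case True
    note v = True
    have "DM *\<^sub>v v = 0\<^sub>v (m*n) \<longleftrightarrow> (\<forall>r<m*n. (DM *\<^sub>v v) $ r = 0)"
    proof
      assume "DM *\<^sub>v v = 0\<^sub>v (m*n)" thus "\<forall>r<m*n. (DM *\<^sub>v v) $ r = 0" by simp
    next
      assume h: "\<forall>r<m*n. (DM *\<^sub>v v) $ r = 0"
      show "DM *\<^sub>v v = 0\<^sub>v (m*n)" by (rule eq_vecI) (use h in auto)
    qed
    also have "\<dots> \<longleftrightarrow> (\<forall>r<(m-1)*n. v $ r = v $ ((m-1)*n + r mod n))"
    proof
      assume h: "\<forall>r<m*n. (DM *\<^sub>v v) $ r = 0"
      show "\<forall>r<(m-1)*n. v $ r = v $ ((m-1)*n + r mod n)"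
      proof (intro allI impI)
        fix r assume r: "r < (m-1)*n"
        have rm: "r < m*n" using r m0 by (metis diff_le_self less_le_trans mult_le_mono1)
        have "(DM *\<^sub>v v) $ r = 0" using h rm by blast
        thus "v $ r = v $ ((m-1)*n + r mod n)" unfolding DM_vec[OF m0 v rm] using r by simp
      qed
    next
      assume h: "\<forall>r<(m-1)*n. v $ r = v $ ((m-1)*n + r mod n)"
      show "\<forall>r<m*n. (DM *\<^sub>v v) $ r = 0"
      proof (intro allI impI)
        fix r assume rm: "r < m*n"
        show "(DM *\<^sub>v v) $ r = 0" unfolding DM_vec[OF m0 v rm]
          using h by auto
      qed
    qed
    also have "\<dots> \<longleftrightarrow> (\<forall>u<m. \<forall>a<n. v $ (u*n+a) = v $ ((m-1)*n+a))"
    proof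
      assume h: "\<forall>r<(m-1)*n. v $ r = v $ ((m-1)*n + r mod n)"
      show "\<forall>u<m. \<forall>a<n. v $ (u*n+a) = v $ ((m-1)*n+a)"
      proof (intro allI impI)
        fix u a assume u: "u < m" and a: "a < n"
        show "v $ (u*n+a) = v $ ((m-1)*n+a)"
        proof (cases "u < m - 1")
          case True
          have "u*n+a < (m-1)*n" using idx_lt[OF True a] .
          hence "v $ (u*n+a) = v $ ((m-1)*n + (u*n+a) mod n)" using h by blast
          thus ?thesis using a by simp
        next
          case False
          hence "u = m - 1" using u by simp
          thus ?thesis by simp
        qed
      qed
    next
      assume h: "\<forall>u<m. \<forall>a<n. v $ (u*n+a) = v $ ((m-1)*n+a)"
      show "\<forall>r<(m-1)*n. v $ r = v $ ((m-1)*n + r mod n)"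
      proof (intro allI impI)
        fix r assume r: "r < (m-1)*n"
        have n0: "n > 0" using r by (cases n, auto)
        have ud: "r div n < m" using r m0
          by (metis less_imp_diff_less less_mult_imp_div_less diff_less zero_less_one
               less_trans not_less_eq)
        have "v $ ((r div n)*n + r mod n) = v $ ((m-1)*n + r mod n)"
          using h ud mod_less_divisor[OF n0] by blast
        thus "v $ r = v $ ((m-1)*n + r mod n)" by simp
      qed
    qed
    finally show ?thesis using k v by simp
  qed
qed

lemma DM_dim: assumes m0: "0 < m" shows "kernel.dim (m*n) DM = n"
proof -
  define f where "f i = (if i < (m-1)*n then i else m*n)" for i
  have mn: "(m-1)*n \<le> m*n" by (simp add: mult_le_mono1)
  have piv: "pivot_fun DM f (m*n)"
  proof (rule pivot_funI)
    show "dim_row DM = m*n" by simp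
  next
    fix i assume "i < m*n" thus "f i \<le> m*n" unfolding f_def using mn by auto
  next
    fix i j assume i: "i < m*n" and j: "j < f i"
    have jm: "j < m*n" using j i mn unfolding f_def by (auto split: if_splits)
    show "DM $$ (i,j) = 0"
    proof (cases "i < (m-1)*n")
      case True
      hence "j < i" using j unfolding f_def by simp
      thus ?thesis using i jm True by auto
    next
      case False thus ?thesis using i jm by simp
    qed
  next
    fix i assume i: "i < m*n" and si: "Suc i < m*n"
    show "f i < f (Suc i) \<or> f (Suc i) = m*n" unfolding f_def using i by auto
  next
    fix i assume i: "i < m*n" and fi: "f i < m*n"
    hence "i < (m-1)*n" unfolding f_def by (auto split: if_splits)
    thus "DM $$ (i, f i) = 1" using i unfolding f_def by simp
  next
    fix i i' assume i: "i < m*n" and fi: "f i < m*n" and i': "i' < m*n" and ne: "i' \<noteq> i"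
    have ii: "i < (m-1)*n" using fi unfolding f_def by (auto split: if_splits)
    show "DM $$ (i', f i) = 0" using ii i i' ne unfolding f_def by auto
  qed
  hence row: "row_echelon_form DM" unfolding row_echelon_form_def by auto
  have rows: "{i. i < m*n \<and> row DM i \<noteq> 0\<^sub>v (m*n)} = {0..<(m-1)*n}"
  proof (rule Set.set_eqI)
   fix i
   show "i \<in> {i. i < m*n \<and> row DM i \<noteq> 0\<^sub>v (m*n)} \<longleftrightarrow> i \<in> {0..<(m-1)*n}"
   proof
    assume "i \<in> {i. i < m*n \<and> row DM i \<noteq> 0\<^sub>v (m*n)}"
    hence i: "i < m*n" and nz: "row DM i \<noteq> 0\<^sub>v (m*n)" by auto
    show "i \<in> {0..<(m-1)*n}"
    proof (rule ccontr)
      assume "i \<notin> {0..<(m-1)*n}"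
      hence "\<not> i < (m-1)*n" by simp
      hence "row DM i = 0\<^sub>v (m*n)" using i by (intro eq_vecI) auto
      with nz show False by simp
    qed
  next
    assume "i \<in> {0..<(m-1)*n}"
    hence i: "i < (m-1)*n" by simp
    have im: "i < m*n" by (rule less_le_trans[OF i mn])
    have "row DM i $ i = 1" using i im by simp
    moreover have "0\<^sub>v (m*n) $ i = (0::real)" using im by simp
    ultimately have "row DM i \<noteq> 0\<^sub>v (m*n)" by auto
    thus "i \<in> {i. i < m*n \<and> row DM i \<noteq> 0\<^sub>v (m*n)}" using im by simp
   qed
  qed
  have "kernel.dim (m*n) DM = m*n - card {i. i < m*n \<and> row DM i \<noteq> 0\<^sub>v (m*n)}"
    by (rule find_base_vectors(6)[OF row DM_carrier])
  also have "\<dots> = m*n - (m-1)*n" unfolding rows by simp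
  also have "\<dots> = n"
  proof -
    from m0 obtain m' where m': "m = Suc m'" by (cases m) auto
    show ?thesis unfolding m' by simp
  qed
  finally show ?thesis .
qed

lemma A_sym: "i < m*n \<Longrightarrow> j < m*n \<Longrightarrow> A_mat m n d e C G $$ (i,j) = A_mat m n d e C G $$ (j,i)"
proof -
  assume i: "i < m*n" and j: "j < m*n"
  have dM: "dim_row MM = m*n" "dim_col MM = m*n" using MM_carrier by auto
  have "MM $$ (i,j) = transpose_mat MM $$ (j,i)" using dM i j by simp
  also have "\<dots> = MM $$ (j,i)" unfolding MM_sym ..
  finally have s: "MM $$ (i,j) = MM $$ (j,i)" .
  show ?thesis unfolding A_eq using i j MM_carrier s by auto
qed

lemma part2: assumes Gall: "G = {..<d}" and m0: "0 < m" and wc: "well_configured m n d e C"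
  shows "order 1 (char_poly (A_mat m n d e C G)) = n"
proof -
  obtain as where "char_poly (A_mat m n d e C G) = (\<Prod>a\<leftarrow>as. [:- a, 1:])"
    using real_sym_split[OF A_carrier A_sym] by blast
  from jordan_nf_exists[OF A_carrier this] obtain n_as where jnf: "jordan_nf (A_mat m n d e C G) n_as" by blast
  have kerk: "mat_kernel (XX ^\<^sub>m k) = mat_kernel DM" if k: "k = 1 \<or> k = 2" for k
  proof (rule Set.set_eqI)
    fix v
    have "v \<in> mat_kernel (XX ^\<^sub>m k) \<longleftrightarrow> (v \<in> carrier_vec (m*n) \<and> MM *\<^sub>v v = 0\<^sub>v (m*n))"
      using k ker_XX1 ker_XX2 by blast
    also have "\<dots> \<longleftrightarrow> v \<in> mat_kernel DM"
      unfolding ker_DM[OF m0] using MM_zero_BE[OF Gall wc] by blast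
    finally show "v \<in> mat_kernel (XX ^\<^sub>m k) \<longleftrightarrow> v \<in> mat_kernel DM" .
  qed
  have dg: "dim_gen_eigenspace (A_mat m n d e C G) 1 k = n" if k: "k = 1 \<or> k = 2" for k
  proof -
    have dc: "dim_col (XX ^\<^sub>m k) = m*n" using XX_carrier by simp
    have "dim_gen_eigenspace (A_mat m n d e C G) 1 k = kernel.dim (m*n) (XX ^\<^sub>m k)"
      unfolding dim_gen_eigenspace_def kernel_dim_def dc ..
    also have "\<dots> = kernel.dim (m*n) DM" using kerk[OF k] by simp
    also have "\<dots> = n" by (rule DM_dim[OF m0])
    finally show ?thesis .
  qed
  have "order 1 (char_poly (A_mat m n d e C G)) = dim_gen_eigenspace (A_mat m n d e C G) 1 1"
    by (rule order_from_dims[OF jnf]) (use dg in simp)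
  thus ?thesis using dg by simp
qed






end


theorem lemma8:
  fixes m n d :: nat and e :: "nat \<Rightarrow> nat \<times> nat" and C :: "nat \<Rightarrow> real mat"
    and G :: "nat set"
  assumes N_graph: "arc_digraph m d e"
    and N_sym: "symmetric_arcs e {..<d}"
    and C_orth: "\<forall>k<d. dim_col (C k) = n \<and> C k * transpose_mat (C k) = 1\<^sub>m (dim_row (C k))"
    and G_sub: "G \<subseteq> {..<d}"
    and G_sym: "symmetric_arcs e G"
  shows "(\<forall>\<mu>. eigenvalue (A_mat m n d e C G) \<mu> \<longrightarrow> -1 < \<mu> \<and> \<mu> \<le> 1)
    \<and> ((G = {..<d} \<and> m > 0 \<and> well_configured m n d e C) \<longrightarrow>
         order 1 (char_poly (A_mat m n d e C G)) = n \<and>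
         (\<forall>\<mu>. eigenvalue (A_mat m n d e C G) \<mu> \<and> \<mu> \<noteq> 1 \<longrightarrow> -1 < \<mu> \<and> \<mu> < 1))"
proof -
  have arcs: "\<forall>k<d. fst (e k) < m \<and> snd (e k) < m \<and> fst (e k) \<noteq> snd (e k)"
    and inj: "inj_on e {..<d}" using N_graph unfolding arc_digraph_def by auto
  have Cdim: "\<forall>k<d. dim_col (C k) = n" using C_orth by auto
  have Corth: "\<forall>k<d. C k * transpose_mat (C k) = 1\<^sub>m (dim_row (C k))" using C_orth by auto
  have eb: "\<And>\<mu>. eigenvalue (A_mat m n d e C G) \<mu> \<Longrightarrow> -1 < \<mu> \<and> \<mu> \<le> 1"
    by (rule eig_bound[OF arcs Cdim G_sub inj G_sym Corth])
  have p2: "G = {..<d} \<Longrightarrow> 0 < m \<Longrightarrow> well_configured m n d e C \<Longrightarrow> order 1 (char_poly (A_mat m n d e C G)) = n"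
    by (rule part2[OF arcs Cdim G_sub inj G_sym Corth])
  have c1: "\<forall>\<mu>. eigenvalue (A_mat m n d e C G) \<mu> \<longrightarrow> -1 < \<mu> \<and> \<mu> \<le> 1" using eb by blast
  have c2: "\<forall>\<mu>. eigenvalue (A_mat m n d e C G) \<mu> \<and> \<mu> \<noteq> 1 \<longrightarrow> -1 < \<mu> \<and> \<mu> < 1"
    using eb by force
  have c3: "(G = {..<d} \<and> m > 0 \<and> well_configured m n d e C) \<longrightarrow> order 1 (char_poly (A_mat m n d e C G)) = n"
    using p2 by blast
  show ?thesis using c1 c2 c3 by blast
qed

end
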